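(* Let $L$ be an ultraparacompact locale with $\bot\neq\top$, $B$ its Boolean algebra of complemented opens, $\mathcal{J}$ the set of partitions of $L$, and $F$ a $B_{\mathcal{J}}$-set. For each $x\in|F|$ the function $\hat x:=\lambda y.\bigvee\{b\in B: x\equiv_b y\}$ is an open of the étale space $E(F)$, and the assignment $x\mapsto\hat x$ is injective. Moreover every $w\in\mathcal{O}(E(F))$ satisfies $w=\bigvee_{x\in|F|}\hat x\wedge\mathrm{const}_{w(x)}$.
   Context: Partitions of $L$: pairwise disjoint sets of opens, not containing $\bot$, with join $\top$ (their members are complemented). $L$ ultraparacompact: every open is a join of complemented opens, and every cover is refined by a partition. A $B_{\mathcal{J}}$-set $F$ is a set $|F|$ with binary operations $b(-,-)$ ($b\in B$) satisfying $b(x,x)=x$, $b(b(x,y),z)=b(x,z)$, $b(x,b(y,z))=b(x,z)$, $\top(x,y)=x$, $(\neg b)(x,y)=b(y,x)$, $(b\wedge c)(x,y)=b(c(x,y),y)$, and $P$-ary operations $P(-)$ for $P\in\mathcal{J}$ satisfying $P(\lambda b.z)=z$, $P(\lambda b.b(x_b,y_b))=P(\lambda b.x_b)$, $b(P(x),x_b)=x_b$ ($b\in P$). For $b\in B$, $x\equiv_by$ iff $b(x,y)=y$. $\mathcal{O}(L)$ is a $B_{\mathcal{J}}$-set via $b(u,v)=(b\wedge u)\vee(\neg b\wedge v)$, $P(\lambda b.u_b)=\bigvee_{b\in P}(b\wedge u_b)$. The étale space $E(F)$ is the locale whose frame $\mathcal{O}(E(F))$ is the set of $B_{\mathcal{J}}$-set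 homomorphisms $F\to\mathcal{O}(L)$, ordered pointwise (meets and joins computed pointwise); $\mathrm{const}_u$ denotes the constant function with value $u$. *)

theory Defs
  imports Main
begin

unbundle lattice_syntax

text \<open>The frame O(L) of opens of a locale L is modelled as a type 'a of class
complete_lattice satisfying the frame (infinite) distributive law.\<close>

definition frame_law :: "'a::complete_lattice itself \<Rightarrow> bool" where
  "frame_law _ \<longleftrightarrow> (\<forall>(a::'a) S. a \<sqinter> Sup S = (SUP s\<in>S. a \<sqinter> s))"

definition complemented :: "'a::complete_lattice \<Rightarrow> bool" where
  "complemented b \<longleftrightarrow> (\<exists>c. b \<sqinter> c = bot \<and> b \<squnion> c = top)"

definition cneg :: "'a::complete_lattice \<Rightarrow> 'a" where
  "cneg b = (THE c. b \<sqinter> c = bot \<and> b \<squnion> c = top)"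

definition partition_of :: "'a::complete_lattice set \<Rightarrow> bool" where
  "partition_of P \<longleftrightarrow> (\<forall>b\<in>P. \<forall>c\<in>P. b \<noteq> c \<longrightarrow> b \<sqinter> c = bot) \<and> bot \<notin> P \<and> Sup P = top"

definition ultraparacompact :: "'a::complete_lattice itself \<Rightarrow> bool" where
  "ultraparacompact _ \<longleftrightarrow>
     (\<forall>u::'a. \<exists>S. (\<forall>s\<in>S. complemented s) \<and> u = Sup S) \<and>
     (\<forall>C::'a set. Sup C = top \<longrightarrow> (\<exists>P. partition_of P \<and> (\<forall>p\<in>P. \<exists>c\<in>C. p \<le> c)))"

text \<open>A B_J-set with carrier X, binary operations bop b (b complemented) and
P-ary operations pop P (P a partition), families given as functions on P.\<close>
definition bj_set :: "'x set \<Rightarrow> ('a::complete_lattice \<Rightarrow> 'x \<Rightarrow> 'x \<Rightarrow> 'x) \<Rightarrow> ('a set \<Rightarrow> ('a \<Rightarrow> 'x) \<Rightarrow> 'x) \<Rightarrow> bool" where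
  "bj_set X bop pop \<longleftrightarrow>
     (\<forall>b x y. complemented b \<longrightarrow> x \<in> X \<longrightarrow> y \<in> X \<longrightarrow> bop b x y \<in> X) \<and>
     (\<forall>P xs. partition_of P \<longrightarrow> (\<forall>b\<in>P. xs b \<in> X) \<longrightarrow> pop P xs \<in> X) \<and>
     (\<forall>P xs ys. partition_of P \<longrightarrow> (\<forall>b\<in>P. xs b = ys b) \<longrightarrow> pop P xs = pop P ys) \<and>
     (\<forall>b x. complemented b \<longrightarrow> x \<in> X \<longrightarrow> bop b x x = x) \<and>
     (\<forall>b x y z. complemented b \<longrightarrow> x \<in> X \<longrightarrow> y \<in> X \<longrightarrow> z \<in> X \<longrightarrow> bop b (bop b x y) z = bop b x z) \<and>
     (\<forall>b x y z. complemented b \<longrightarrow> x \<in> X \<longrightarrow> y \<in> X \<longrightarrow> z \<in> X \<longrightarrow> bop b x (bop b y z) = bop b x z) \<and>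
     (\<forall>x y. x \<in> X \<longrightarrow> y \<in> X \<longrightarrow> bop top x y = x) \<and>
     (\<forall>b x y. complemented b \<longrightarrow> x \<in> X \<longrightarrow> y \<in> X \<longrightarrow> bop (cneg b) x y = bop b y x) \<and>
     (\<forall>b c x y. complemented b \<longrightarrow> complemented c \<longrightarrow> x \<in> X \<longrightarrow> y \<in> X \<longrightarrow>
         bop (b \<sqinter> c) x y = bop b (bop c x y) y) \<and>
     (\<forall>P z. partition_of P \<longrightarrow> z \<in> X \<longrightarrow> pop P (\<lambda>b. z) = z) \<and>
     (\<forall>P xs ys. partition_of P \<longrightarrow> (\<forall>b\<in>P. xs b \<in> X \<and> ys b \<in> X) \<longrightarrow>
         pop P (\<lambda>b. bop b (xs b) (ys b)) = pop P xs) \<and>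
     (\<forall>P xs b. partition_of P \<longrightarrow> (\<forall>c\<in>P. xs c \<in> X) \<longrightarrow> b \<in> P \<longrightarrow>
         bop b (pop P xs) (xs b) = xs b)"

definition beq :: "('a \<Rightarrow> 'x \<Rightarrow> 'x \<Rightarrow> 'x) \<Rightarrow> 'a \<Rightarrow> 'x \<Rightarrow> 'x \<Rightarrow> bool" where
  "beq bop b x y \<longleftrightarrow> bop b x y = y"

definition bj_hom :: "'x set \<Rightarrow> ('a::complete_lattice \<Rightarrow> 'x \<Rightarrow> 'x \<Rightarrow> 'x) \<Rightarrow> ('a set \<Rightarrow> ('a \<Rightarrow> 'x) \<Rightarrow> 'x) \<Rightarrow> ('x \<Rightarrow> 'a) \<Rightarrow> bool" where
  "bj_hom X bop pop h \<longleftrightarrow>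
     (\<forall>b x y. complemented b \<longrightarrow> x \<in> X \<longrightarrow> y \<in> X \<longrightarrow>
        h (bop b x y) = (b \<sqinter> h x) \<squnion> (cneg b \<sqinter> h y)) \<and>
     (\<forall>P xs. partition_of P \<longrightarrow> (\<forall>b\<in>P. xs b \<in> X) \<longrightarrow>
        h (pop P xs) = (SUP b\<in>P. b \<sqinter> h (xs b)))"

text \<open>The frame O(E(F)): homomorphisms, represented extensionally (value bot off the carrier);
order, meets and joins are pointwise.\<close>
definition etale_opens :: "'x set \<Rightarrow> ('a::complete_lattice \<Rightarrow> 'x \<Rightarrow> 'x \<Rightarrow> 'x) \<Rightarrow> ('a set \<Rightarrow> ('a \<Rightarrow> 'x) \<Rightarrow> 'x) \<Rightarrow> ('x \<Rightarrow> 'a) set" where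
  "etale_opens X bop pop = {h. bj_hom X bop pop h \<and> (\<forall>y. y \<notin> X \<longrightarrow> h y = bot)}"

definition hat :: "'x set \<Rightarrow> ('a::complete_lattice \<Rightarrow> 'x \<Rightarrow> 'x \<Rightarrow> 'x) \<Rightarrow> 'x \<Rightarrow> 'x \<Rightarrow> 'a" where
  "hat X bop x = (\<lambda>y. if y \<in> X then Sup {b. complemented b \<and> beq bop b x y} else bot)"

end

theory Submission
  imports Defs
begin

unbundle lattice_syntax

locale ctx =
  fixes X :: "'x set" and bop :: "'a::complete_lattice \<Rightarrow> 'x \<Rightarrow> 'x \<Rightarrow> 'x"
    and pop :: "'a set \<Rightarrow> ('a \<Rightarrow> 'x) \<Rightarrow> 'x"
  assumes fl: "frame_law TYPE('a)" and bj: "bj_set X bop pop"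
begin

lemma flS: "(a::'a) \<sqinter> Sup S = (SUP s\<in>S. a \<sqinter> s)"
  using fl unfolding frame_law_def by blast

lemma distr: "(a::'a) \<sqinter> (b \<squnion> c) = (a \<sqinter> b) \<squnion> (a \<sqinter> c)"
proof -
  have "a \<sqinter> Sup {b,c} = (SUP s\<in>{b,c}. a \<sqinter> s)" by (rule flS)
  thus ?thesis by simp
qed

lemma distr2: "(b \<squnion> c) \<sqinter> (a::'a) = (b \<sqinter> a) \<squnion> (c \<sqinter> a)"
proof -
  have "(b \<squnion> c) \<sqinter> a = a \<sqinter> (b \<squnion> c)" by (rule inf.commute)
  also have "\<dots> = (a \<sqinter> b) \<squnion> (a \<sqinter> c)" by (rule distr)
  also have "\<dots> = (b \<sqinter> a) \<squnion> (c \<sqinter> a)" by (simp only: inf.commute[of a b] inf.commute[of a c])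
  finally show ?thesis .
qed

lemma distr_sup: "(x::'a) \<squnion> (y \<sqinter> z) = (x \<squnion> y) \<sqinter> (x \<squnion> z)"
proof -
  have "(x\<squnion>y)\<sqinter>(x\<squnion>z) = ((x\<squnion>y)\<sqinter>x) \<squnion> ((x\<squnion>y)\<sqinter>z)" by (rule distr)
  also have "(x\<squnion>y)\<sqinter>x = x" by (rule inf.absorb2) simp
  also have "(x\<squnion>y)\<sqinter>z = (x\<sqinter>z) \<squnion> (y\<sqinter>z)" by (rule distr2)
  also have "x \<squnion> ((x\<sqinter>z) \<squnion> (y\<sqinter>z)) = (x \<squnion> (x\<sqinter>z)) \<squnion> (y\<sqinter>z)" by (rule sup.assoc[symmetric])
  also have "x \<squnion> (x\<sqinter>z) = x" by (rule sup.absorb1) simp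
  finally show ?thesis by (rule sym)
qed

lemma compl_unique:
  assumes "b \<sqinter> c = bot" "b \<squnion> c = top" "b \<sqinter> c' = bot" "b \<squnion> c' = top"
  shows "c = (c'::'a)"
proof -
  have "c = c \<sqinter> (b \<squnion> c')" using assms(4) by simp
  also have "\<dots> = (c\<sqinter>b) \<squnion> (c\<sqinter>c')" by (rule distr)
  also have "c\<sqinter>b = bot" using assms(1) by (simp only: inf.commute)
  finally have 1: "c = c \<sqinter> c'" by simp
  have "c' = c' \<sqinter> (b \<squnion> c)" using assms(2) by simp
  also have "\<dots> = (c'\<sqinter>b) \<squnion> (c'\<sqinter>c)" by (rule distr)
  also have "c'\<sqinter>b = bot" using assms(3) by (simp only: inf.commute)
  finally have "c' = c' \<sqinter> c" by simp
  also have "\<dots> = c \<sqinter> c'" by (rule inf.commute)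
  finally show ?thesis using 1 by simp
qed

lemma cneg: assumes "complemented (b::'a)" shows "b \<sqinter> cneg b = bot \<and> b \<squnion> cneg b = top"
proof -
  obtain c where c: "b \<sqinter> c = bot \<and> b \<squnion> c = top" using assms unfolding complemented_def by blast
  have "\<exists>!c. b \<sqinter> c = bot \<and> b \<squnion> c = top"
  proof (rule ex1I[of _ c])
    show "b \<sqinter> c = bot \<and> b \<squnion> c = top" by (rule c)
    fix c' assume "b \<sqinter> c' = bot \<and> b \<squnion> c' = top"
    thus "c' = c" using c compl_unique[of b c' c] by blast
  qed
  thus ?thesis unfolding cneg_def by (rule theI')
qed

lemma compl_cneg: assumes "complemented (b::'a)" shows "complemented (cneg b)"
proof -
  have "cneg b \<sqinter> b = bot" "cneg b \<squnion> b = top" using cneg[OF assms]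
    by (simp_all only: inf.commute sup.commute)
  thus ?thesis unfolding complemented_def by (intro exI[of _ b] conjI)
qed

lemma compl_top: "complemented (top::'a)"
  unfolding complemented_def by (intro exI[of _ bot] conjI) simp_all

lemma compl_inf: assumes "complemented (b::'a)" "complemented c" shows "complemented (b \<sqinter> c)"
proof -
  let ?nb = "cneg b" and ?nc = "cneg c"
  have b: "b \<sqinter> ?nb = bot" "b \<squnion> ?nb = top" using cneg[OF assms(1)] by auto
  have c: "c \<sqinter> ?nc = bot" "c \<squnion> ?nc = top" using cneg[OF assms(2)] by auto
  have "(b \<sqinter> c) \<sqinter> ?nb \<le> b \<sqinter> ?nb" by (meson inf_le1 inf_le2 le_infI order_trans)
  hence e1: "(b \<sqinter> c) \<sqinter> ?nb = bot" using b(1) by (simp add: bot_unique)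
  have "(b \<sqinter> c) \<sqinter> ?nc \<le> c \<sqinter> ?nc" by (meson inf_le1 inf_le2 le_infI order_trans)
  hence e2: "(b \<sqinter> c) \<sqinter> ?nc = bot" using c(1) by (simp add: bot_unique)
  have "(b \<sqinter> c) \<sqinter> (?nb \<squnion> ?nc) = ((b \<sqinter> c) \<sqinter> ?nb) \<squnion> ((b \<sqinter> c) \<sqinter> ?nc)" by (rule distr)
  also have "\<dots> = bot" using e1 e2 by simp
  finally have 1: "(b \<sqinter> c) \<sqinter> (?nb \<squnion> ?nc) = bot" .
  have "b \<squnion> ?nb \<le> (?nb \<squnion> ?nc) \<squnion> b" by (meson sup_ge1 sup_ge2 le_supI order_trans)
  hence f1: "(?nb \<squnion> ?nc) \<squnion> b = top" using b(2) by (simp add: top_unique)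
  have "c \<squnion> ?nc \<le> (?nb \<squnion> ?nc) \<squnion> c" by (meson sup_ge1 sup_ge2 le_supI order_trans)
  hence f2: "(?nb \<squnion> ?nc) \<squnion> c = top" using c(2) by (simp add: top_unique)
  have "(?nb \<squnion> ?nc) \<squnion> (b \<sqinter> c) = ((?nb \<squnion> ?nc) \<squnion> b) \<sqinter> ((?nb \<squnion> ?nc) \<squnion> c)" by (rule distr_sup)
  also have "\<dots> = top" using f1 f2 by simp
  finally have "(?nb \<squnion> ?nc) \<squnion> (b \<sqinter> c) = top" .
  hence 2: "(b \<sqinter> c) \<squnion> (?nb \<squnion> ?nc) = top" by (simp only: sup.commute)
  show ?thesis unfolding complemented_def by (rule exI[of _ "cneg b \<squnion> cneg c"], intro conjI 1 2)
qed

lemma splitc: assumes "complemented (b::'a)" shows "c = (c \<sqinter> b) \<squnion> (c \<sqinter> cneg b)"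
proof -
  have "c = c \<sqinter> (b \<squnion> cneg b)" using cneg[OF assms] by simp
  also have "\<dots> = (c \<sqinter> b) \<squnion> (c \<sqinter> cneg b)" by (rule distr)
  finally show ?thesis .
qed

lemma part_compl: assumes "partition_of (P::'a set)" "p \<in> P" shows "complemented p"
proof -
  have "p \<sqinter> Sup (P - {p}) = (SUP q\<in>P-{p}. p \<sqinter> q)" by (rule flS)
  also have "\<dots> = bot" unfolding SUP_bot_conv using assms unfolding partition_of_def by auto
  finally have 1: "p \<sqinter> Sup (P - {p}) = bot" .
  have "p \<squnion> Sup (P - {p}) = Sup (insert p (P - {p}))" by (simp only: Sup_insert)
  also have "insert p (P - {p}) = P" using assms(2) by auto
  also have "Sup P = top" using assms unfolding partition_of_def by simp
  finally have 2: "p \<squnion> Sup (P - {p}) = top" .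
  show ?thesis unfolding complemented_def by (rule exI[of _ "Sup (P - {p})"], intro conjI 1 2)
qed

lemmas bjs = bj[unfolded bj_set_def]

lemma cl_bop: "complemented b \<Longrightarrow> x \<in> X \<Longrightarrow> y \<in> X \<Longrightarrow> bop b x y \<in> X"
  using bjs[THEN conjunct1] by blast
lemma cl_pop: "partition_of P \<Longrightarrow> (\<forall>b\<in>P. xs b \<in> X) \<Longrightarrow> pop P xs \<in> X"
  using bjs[THEN conjunct2, THEN conjunct1] by blast
lemma pop_cong: "partition_of P \<Longrightarrow> (\<forall>b\<in>P. xs b = ys b) \<Longrightarrow> pop P xs = pop P ys"
  using bjs[THEN conjunct2, THEN conjunct2, THEN conjunct1] by blast
lemma ax_idem: "complemented b \<Longrightarrow> x \<in> X \<Longrightarrow> bop b x x = x"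
  using bjs[THEN conjunct2, THEN conjunct2, THEN conjunct2, THEN conjunct1] by blast
lemma ax_l: "complemented b \<Longrightarrow> x \<in> X \<Longrightarrow> y \<in> X \<Longrightarrow> z \<in> X \<Longrightarrow> bop b (bop b x y) z = bop b x z"
  using bjs[THEN conjunct2, THEN conjunct2, THEN conjunct2, THEN conjunct2, THEN conjunct1] by blast
lemma ax_r: "complemented b \<Longrightarrow> x \<in> X \<Longrightarrow> y \<in> X \<Longrightarrow> z \<in> X \<Longrightarrow> bop b x (bop b y z) = bop b x z"
  using bjs[THEN conjunct2, THEN conjunct2, THEN conjunct2, THEN conjunct2, THEN conjunct2, THEN conjunct1] by blast
lemma ax_neg: "complemented b \<Longrightarrow> x \<in> X \<Longrightarrow> y \<in> X \<Longrightarrow> bop (cneg b) x y = bop b y x"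
  using bjs[THEN conjunct2, THEN conjunct2, THEN conjunct2, THEN conjunct2, THEN conjunct2, THEN conjunct2, THEN conjunct2, THEN conjunct1] by blast
lemma ax_inf: "complemented b \<Longrightarrow> complemented c \<Longrightarrow> x \<in> X \<Longrightarrow> y \<in> X \<Longrightarrow>
         bop (b \<sqinter> c) x y = bop b (bop c x y) y"
  using bjs[THEN conjunct2, THEN conjunct2, THEN conjunct2, THEN conjunct2, THEN conjunct2, THEN conjunct2, THEN conjunct2, THEN conjunct2, THEN conjunct1] by blast
lemma ax_pconst: "partition_of P \<Longrightarrow> z \<in> X \<Longrightarrow> pop P (\<lambda>b. z) = z"
  using bjs[THEN conjunct2, THEN conjunct2, THEN conjunct2, THEN conjunct2, THEN conjunct2, THEN conjunct2, THEN conjunct2, THEN conjunct2, THEN conjunct2, THEN conjunct1] by blast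
lemma ax_pbop: "partition_of P \<Longrightarrow> (\<forall>b\<in>P. xs b \<in> X \<and> ys b \<in> X) \<Longrightarrow>
         pop P (\<lambda>b. bop b (xs b) (ys b)) = pop P xs"
  using bjs[THEN conjunct2, THEN conjunct2, THEN conjunct2, THEN conjunct2, THEN conjunct2, THEN conjunct2, THEN conjunct2, THEN conjunct2, THEN conjunct2, THEN conjunct2, THEN conjunct1] by blast
lemma ax_proj: "partition_of P \<Longrightarrow> (\<forall>c\<in>P. xs c \<in> X) \<Longrightarrow> b \<in> P \<Longrightarrow>
         bop b (pop P xs) (xs b) = xs b"
  using bjs[THEN conjunct2, THEN conjunct2, THEN conjunct2, THEN conjunct2, THEN conjunct2, THEN conjunct2, THEN conjunct2, THEN conjunct2, THEN conjunct2, THEN conjunct2, THEN conjunct2] by blast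

lemma beq_refl: "complemented b \<Longrightarrow> x \<in> X \<Longrightarrow> beq bop b x x"
  unfolding beq_def by (rule ax_idem)

lemma beq_sym: "complemented b \<Longrightarrow> x \<in> X \<Longrightarrow> y \<in> X \<Longrightarrow> beq bop b x y \<Longrightarrow> beq bop b y x"
  unfolding beq_def by (metis ax_l ax_idem)

lemma beq_trans: "complemented b \<Longrightarrow> x \<in> X \<Longrightarrow> y \<in> X \<Longrightarrow> z \<in> X \<Longrightarrow>
   beq bop b x y \<Longrightarrow> beq bop b y z \<Longrightarrow> beq bop b x z"
  unfolding beq_def by (metis ax_l)

lemma beq_mono: assumes "complemented c" "complemented d" "c \<le> d" "x \<in> X" "y \<in> X" "beq bop d x y"
  shows "beq bop c x y"
proof -
  have "c = c \<sqinter> d" using assms by (simp add: inf_absorb1)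
  hence "bop c x y = bop (c \<sqinter> d) x y" by simp
  also have "\<dots> = bop c (bop d x y) y" using assms by (simp add: ax_inf)
  also have "\<dots> = y" using assms by (simp add: beq_def ax_idem)
  finally show ?thesis unfolding beq_def .
qed

lemma beq_b: "complemented b \<Longrightarrow> y \<in> X \<Longrightarrow> z \<in> X \<Longrightarrow> beq bop b (bop b y z) y"
  unfolding beq_def by (simp add: ax_l ax_idem)

lemma beq_nb: "complemented b \<Longrightarrow> y \<in> X \<Longrightarrow> z \<in> X \<Longrightarrow> beq bop (cneg b) (bop b y z) z"
  unfolding beq_def by (simp add: ax_neg ax_r ax_idem cl_bop)

lemma beq_pop: "partition_of P \<Longrightarrow> (\<forall>c\<in>P. ys c \<in> X) \<Longrightarrow> p \<in> P \<Longrightarrow> beq bop p (pop P ys) (ys p)"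
  unfolding beq_def by (rule ax_proj)

lemma key:
  assumes "\<And>c. complemented c \<Longrightarrow> beq bop c x y \<Longrightarrow> beq bop (b \<sqinter> c) x u" "complemented b"
  shows "b \<sqinter> Sup {c. complemented c \<and> beq bop c x y} \<le> Sup {c. complemented c \<and> beq bop c x u}"
  unfolding flS
proof (rule SUP_least)
  fix c assume "c \<in> {c. complemented c \<and> beq bop c x y}"
  hence "b \<sqinter> c \<in> {c. complemented c \<and> beq bop c x u}" using assms compl_inf by blast
  thus "b \<sqinter> c \<le> Sup {c. complemented c \<and> beq bop c x u}" by (rule Sup_upper)
qed

lemma hat_bop:
  assumes x: "x \<in> X" and b: "complemented b" and y: "y \<in> X" and z: "z \<in> X"
  shows "hat X bop x (bop b y z) = (b \<sqinter> hat X bop x y) \<squnion> (cneg b \<sqinter> hat X bop x z)"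
proof -
  let ?u = "bop b y z"
  have u: "?u \<in> X" using b y z by (rule cl_bop)
  have nb: "complemented (cneg b)" using b by (rule compl_cneg)
  have uy: "beq bop b ?u y" using b y z by (rule beq_b)
  have uz: "beq bop (cneg b) ?u z" using b y z by (rule beq_nb)
  let ?H = "\<lambda>v. Sup {c. complemented c \<and> beq bop c x v}"
  have "?H ?u \<le> (b \<sqinter> ?H y) \<squnion> (cneg b \<sqinter> ?H z)"
  proof (rule Sup_least)
    fix c assume "c \<in> {c. complemented c \<and> beq bop c x ?u}"
    hence c: "complemented c" "beq bop c x ?u" by auto
    have cb: "complemented (c \<sqinter> b)" using c b compl_inf by blast
    have cnb: "complemented (c \<sqinter> cneg b)" using c nb compl_inf by blast
    have "beq bop (c \<sqinter> b) x y"
      using beq_trans[OF cb x u y beq_mono[OF cb c(1) _ x u c(2)] beq_mono[OF cb b _ u y uy]] by simp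
    hence 1: "c \<sqinter> b \<le> b \<sqinter> ?H y" using cb by (auto intro: Sup_upper)
    have "beq bop (c \<sqinter> cneg b) x z"
      using beq_trans[OF cnb x u z beq_mono[OF cnb c(1) _ x u c(2)] beq_mono[OF cnb nb _ u z uz]] by simp
    hence 2: "c \<sqinter> cneg b \<le> cneg b \<sqinter> ?H z" using cnb by (auto intro: Sup_upper)
    have "c = (c \<sqinter> b) \<squnion> (c \<sqinter> cneg b)" using b by (rule splitc)
    also have "\<dots> \<le> (b \<sqinter> ?H y) \<squnion> (cneg b \<sqinter> ?H z)" using 1 2 by (rule sup_mono)
    finally show "c \<le> (b \<sqinter> ?H y) \<squnion> (cneg b \<sqinter> ?H z)" .
  qed
  moreover have "b \<sqinter> ?H y \<le> ?H ?u"
  proof (rule key[OF _ b])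
    fix c assume c: "complemented c" "beq bop c x y"
    have bc: "complemented (b \<sqinter> c)" using c b compl_inf by blast
    show "beq bop (b \<sqinter> c) x ?u"
      using beq_trans[OF bc x y u beq_mono[OF bc c(1) _ x y c(2)]
          beq_sym[OF bc u y beq_mono[OF bc b _ u y uy]]] by simp
  qed
  moreover have "cneg b \<sqinter> ?H z \<le> ?H ?u"
  proof (rule key[OF _ nb])
    fix c assume c: "complemented c" "beq bop c x z"
    have bc: "complemented (cneg b \<sqinter> c)" using c nb compl_inf by blast
    show "beq bop (cneg b \<sqinter> c) x ?u"
      using beq_trans[OF bc x z u beq_mono[OF bc c(1) _ x z c(2)]
          beq_sym[OF bc u z beq_mono[OF bc nb _ u z uz]]] by simp
  qed
  ultimately have "?H ?u = (b \<sqinter> ?H y) \<squnion> (cneg b \<sqinter> ?H z)" by (auto intro: antisym)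
  thus ?thesis unfolding hat_def using u y z by simp
qed

lemma hat_pop:
  assumes x: "x \<in> X" and P: "partition_of P" and ys: "\<forall>b\<in>P. ys b \<in> X"
  shows "hat X bop x (pop P ys) = (SUP b\<in>P. b \<sqinter> hat X bop x (ys b))"
proof -
  let ?v = "pop P ys"
  have v: "?v \<in> X" using P ys by (rule cl_pop)
  let ?H = "\<lambda>v. Sup {c. complemented c \<and> beq bop c x v}"
  have e: "(SUP b\<in>P. b \<sqinter> hat X bop x (ys b)) = (SUP b\<in>P. b \<sqinter> ?H (ys b))"
    using ys unfolding hat_def by (auto intro: SUP_cong)
  have "?H ?v \<le> (SUP b\<in>P. b \<sqinter> ?H (ys b))"
  proof (rule Sup_least)
    fix c assume "c \<in> {c. complemented c \<and> beq bop c x ?v}"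
    hence c: "complemented c" "beq bop c x ?v" by auto
    have "c = c \<sqinter> Sup P" using P unfolding partition_of_def by simp
    also have "\<dots> = (SUP p\<in>P. c \<sqinter> p)" by (rule flS)
    also have "\<dots> \<le> (SUP b\<in>P. b \<sqinter> ?H (ys b))"
    proof (rule SUP_mono)
      fix p assume p: "p \<in> P"
      have pc: "complemented p" using P p by (rule part_compl)
      have cp: "complemented (c \<sqinter> p)" using c pc compl_inf by blast
      have yp: "ys p \<in> X" using ys p by blast
      have "beq bop (c \<sqinter> p) x (ys p)"
        using beq_trans[OF cp x v yp beq_mono[OF cp c(1) _ x v c(2)]
            beq_mono[OF cp pc _ v yp beq_pop[OF P ys p]]] by simp
      hence "c \<sqinter> p \<le> p \<sqinter> ?H (ys p)" using cp by (auto intro: Sup_upper)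
      thus "\<exists>m\<in>P. c \<sqinter> p \<le> m \<sqinter> ?H (ys m)" using p by blast
    qed
    finally show "c \<le> (SUP b\<in>P. b \<sqinter> ?H (ys b))" .
  qed
  moreover have "(SUP b\<in>P. b \<sqinter> ?H (ys b)) \<le> ?H ?v"
  proof (rule SUP_least)
    fix p assume p: "p \<in> P"
    have pc: "complemented p" using P p by (rule part_compl)
    have yp: "ys p \<in> X" using ys p by blast
    show "p \<sqinter> ?H (ys p) \<le> ?H ?v"
    proof (rule key[OF _ pc])
      fix c assume c: "complemented c" "beq bop c x (ys p)"
      have bc: "complemented (p \<sqinter> c)" using c pc compl_inf by blast
      show "beq bop (p \<sqinter> c) x ?v"
        using beq_trans[OF bc x yp v beq_mono[OF bc c(1) _ x yp c(2)]
            beq_sym[OF bc v yp beq_mono[OF bc pc _ v yp beq_pop[OF P ys p]]]] by simp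
    qed
  qed
  ultimately have "?H ?v = (SUP b\<in>P. b \<sqinter> ?H (ys b))" by (rule antisym)
  thus ?thesis unfolding e unfolding hat_def using v by simp
qed

lemma hat_open: "x \<in> X \<Longrightarrow> hat X bop x \<in> etale_opens X bop pop"
  unfolding etale_opens_def bj_hom_def
  using hat_bop hat_pop cl_bop by (auto simp: hat_def)

lemma hat_self: "x \<in> X \<Longrightarrow> hat X bop x x = top"
  unfolding hat_def using compl_top beq_refl by (auto intro: top_le Sup_upper)

lemma hat_inj:
  assumes up: "ultraparacompact TYPE('a)"
  shows "inj_on (hat X bop) X"
proof (rule inj_onI)
  fix x x' assume x: "x \<in> X" and x': "x' \<in> X" and eq: "hat X bop x = hat X bop x'"
  let ?C = "{c. complemented c \<and> beq bop c x' x}"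
  have "Sup ?C = hat X bop x' x" unfolding hat_def using x by simp
  also have "\<dots> = top" using eq hat_self[OF x] by simp
  finally have "Sup ?C = top" .
  then obtain P where P: "partition_of P" and ref: "\<forall>p\<in>P. \<exists>c\<in>?C. p \<le> c"
    using up unfolding ultraparacompact_def by blast
  have bp: "\<forall>p\<in>P. bop p x' x = x"
  proof
    fix p assume p: "p \<in> P"
    then obtain c where c: "complemented c" "beq bop c x' x" "p \<le> c" using ref by blast
    have "beq bop p x' x" using beq_mono[OF part_compl[OF P p] c(1) c(3) x' x c(2)] .
    thus "bop p x' x = x" unfolding beq_def .
  qed
  have "x = pop P (\<lambda>p. x)" using ax_pconst[OF P x] by (rule sym)
  also have "\<dots> = pop P (\<lambda>p. bop p x' x)" using pop_cong[OF P, of "\<lambda>p. x" "\<lambda>p. bop p x' x"] bp by auto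
  also have "\<dots> = pop P (\<lambda>p. x')" using ax_pbop[OF P, of "\<lambda>p. x'" "\<lambda>p. x"] x x' by simp
  also have "\<dots> = x'" using ax_pconst[OF P x'] .
  finally show "x = x'" .
qed

lemma decomp:
  assumes w: "w \<in> etale_opens X bop pop"
  shows "w = (SUP x\<in>X. hat X bop x \<sqinter> (\<lambda>_. w x))"
proof (rule ext)
  fix y
  have wh: "bj_hom X bop pop w" and wb: "\<forall>y. y \<notin> X \<longrightarrow> w y = bot"
    using w unfolding etale_opens_def by auto
  have R: "(SUP x\<in>X. hat X bop x \<sqinter> (\<lambda>_. w x)) y = (SUP x\<in>X. hat X bop x y \<sqinter> w x)"
    by (simp add: SUP_apply image_image)
  show "w y = (SUP x\<in>X. hat X bop x \<sqinter> (\<lambda>_. w x)) y"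
  proof (cases "y \<in> X")
    case False
    thus ?thesis unfolding R using wb by (simp add: hat_def)
  next
    case y: True
    have "w y \<le> (SUP x\<in>X. hat X bop x y \<sqinter> w x)"
      using SUP_upper[OF y, of "\<lambda>x. hat X bop x y \<sqinter> w x"] hat_self[OF y] by simp
    moreover have "(SUP x\<in>X. hat X bop x y \<sqinter> w x) \<le> w y"
    proof (rule SUP_least)
      fix x assume x: "x \<in> X"
      have "hat X bop x y \<sqinter> w x = w x \<sqinter> Sup {c. complemented c \<and> beq bop c x y}"
        unfolding hat_def using y by (simp add: inf_commute)
      also have "\<dots> = (SUP c\<in>{c. complemented c \<and> beq bop c x y}. w x \<sqinter> c)" by (rule flS)
      also have "\<dots> \<le> w y"
      proof (rule SUP_least)
        fix c assume "c \<in> {c. complemented c \<and> beq bop c x y}"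
        hence c: "complemented c" "bop c x y = y" unfolding beq_def by auto
        have "w y = w (bop c x y)" using c by simp
        also have "\<dots> = (c \<sqinter> w x) \<squnion> (cneg c \<sqinter> w y)"
          using wh c(1) x y unfolding bj_hom_def by blast
        finally have "c \<sqinter> w x \<le> w y" by (metis sup_ge1)
        thus "w x \<sqinter> c \<le> w y" by (simp add: inf_commute)
      qed
      finally show "hat X bop x y \<sqinter> w x \<le> w y" .
    qed
    ultimately show ?thesis unfolding R by (rule antisym)
  qed
qed

end

theorem lemma2p18:
  fixes X :: "'x set"
    and bop :: "'a::complete_lattice \<Rightarrow> 'x \<Rightarrow> 'x \<Rightarrow> 'x"
    and pop :: "'a set \<Rightarrow> ('a \<Rightarrow> 'x) \<Rightarrow> 'x"
  assumes "frame_law TYPE('a)"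
    and "ultraparacompact TYPE('a)"
    and "(bot::'a) \<noteq> top"
    and "bj_set X bop pop"
  shows "(\<forall>x\<in>X. hat X bop x \<in> etale_opens X bop pop)
       \<and> inj_on (hat X bop) X
       \<and> (\<forall>w\<in>etale_opens X bop pop. w = (SUP x\<in>X. hat X bop x \<sqinter> (\<lambda>_. w x)))"
proof -
  interpret ctx X bop pop using assms(1,4) by unfold_locales
  have "\<forall>x\<in>X. hat X bop x \<in> etale_opens X bop pop" using hat_open by blast
  moreover have "\<forall>w\<in>etale_opens X bop pop. w = (SUP x\<in>X. hat X bop x \<sqinter> (\<lambda>_. w x))"
    using decomp by blast
  ultimately show ?thesis using hat_inj[OF assms(2)] by (intro conjI)
qed

end
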